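(* For all non-negative integers $\beta$ and $k$, let $$X := \{(\alpha, l) \in \mathbb{Z}^2 : 0 \leq \alpha \leq \beta,\ 0 \leq l \leq k,\ (\alpha,l) \neq (\beta, k),\ (q-1) \mid (\beta + k -(\alpha + l)) \}.$$ Then $L(\chi_t^0, 0) = 1$, and $$L(\chi_t^\beta,-k) = 1 - \sum_{(\alpha,l) \in X}{\beta \choose \alpha}{k \choose l}t^\alpha \theta^l\, L(\chi_t^\alpha, -l).$$
   Context: Let $q$ be a power of a prime $p$, $A=\mathbb{F}_q[\theta]$, and $A_+(d)$ the set of monic polynomials in $A$ of degree $d$. Let $t$ be an indeterminate and $\chi_t:A\to\mathbb{F}_q[t]$ the $\mathbb{F}_q$-algebra morphism with $\theta\mapsto t$; $\chi_t(a)^0:=1$. For non-negative integers $\beta,k,d$ let $S_d(\chi_t^\beta,k):=\sum_{a\in A_+(d)}\chi_t(a)^\beta a^k\in A[t]$. It is known that $S_d(\chi_t^\beta,k)=0$ for all sufficiently large $d$, so $z(\chi_t^\beta,x,-k):=\sum_{d\ge0}x^{-d}S_d(\chi_t^\beta,k)$ is a polynomial in $x^{-1}$ over $A[t]$, and one defines $L(\chi_t^\beta,-k):=z(\chi_t^\beta,1,-k)=\sum_{d\ge 0}S_d(\chi_t^\beta,k)\in A[t]$. *)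

theory Defs
  imports "HOL-Computational_Algebra.Polynomial"
begin

text \<open>F_q is a finite field type 'a (q = CARD('a)); A = F_q[theta] is 'a poly;
  A[t] is ('a poly) poly: the outer variable is t, coefficients lie in A.\<close>

definition monics :: "nat \<Rightarrow> 'a::{field,finite} poly set" where
  "monics d = {a. lead_coeff a = 1 \<and> degree a = d}"

text \<open>chi_t : A -> F_q[t] \<subseteq> A[t], theta \<mapsto> t.\<close>
definition chi_t :: "'a::{field,finite} poly \<Rightarrow> 'a poly poly" where
  "chi_t a = map_poly (\<lambda>c. [:c:]) a"

definition theta_At :: "'a::{field,finite} poly poly" where
  "theta_At = [:[:0, 1:]:]"

definition t_At :: "'a::{field,finite} poly poly" where
  "t_At = [:0, 1:]"

definition S_d :: "nat \<Rightarrow> nat \<Rightarrow> nat \<Rightarrow> 'a::{field,finite} poly poly" where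
  "S_d \<beta> k d = (\<Sum>a\<in>monics d. chi_t a ^ \<beta> * [:a ^ k:])"

text \<open>L(chi_t^beta, -k) = sum over d >= 0 of S_d; the sum is over the (finite) support.\<close>
definition L_val :: "nat \<Rightarrow> nat \<Rightarrow> 'a::{field,finite} poly poly" where
  "L_val \<beta> k = (\<Sum>d\<in>{d. (S_d \<beta> k d :: 'a poly poly) \<noteq> 0}. (S_d \<beta> k d :: 'a poly poly))"

end

theory Submission
  imports Defs
begin


lemma ff_char: "(of_nat (card (UNIV::'a::{field,finite} set)) :: 'a) = 0"
proof -
  have "(\<Sum>c\<in>UNIV. c + (1::'a)) = (\<Sum>c\<in>UNIV. c)"
    by (rule sum.reindex_bij_witness[of _ "\<lambda>c. c - 1" "\<lambda>c. c + 1"]) auto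
  then show ?thesis by (simp add: sum.distrib)
qed

lemma ff_card_ge2: "card (UNIV::'a::{field,finite} set) \<ge> 2"
proof -
  have "{0,1::'a} \<subseteq> UNIV" by simp
  then have "card {0,1::'a} \<le> card (UNIV::'a set)" by (rule card_mono[OF finite_UNIV])
  then show ?thesis by simp
qed

lemma ff_fermat:
  fixes x :: "'a::{field,finite}"
  assumes "x \<noteq> 0" shows "x ^ (card (UNIV::'a set) - 1) = 1"
proof -
  let ?N = "UNIV - {0::'a}"
  have cN: "card ?N = card (UNIV::'a set) - 1" by (simp add: card_Diff_singleton)
  have "(\<Prod>c\<in>?N. x * c) = (\<Prod>c\<in>?N. c)"
    by (rule prod.reindex_bij_witness[of _ "\<lambda>c. c / x" "\<lambda>c. x * c"]) (use assms in auto)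
  then have "x ^ card ?N * (\<Prod>c\<in>?N. c) = (\<Prod>c\<in>?N. c)" by (simp add: prod.distrib)
  moreover have "(\<Prod>c\<in>?N. c) \<noteq> 0" by simp
  ultimately show ?thesis using cN by simp
qed

lemma ff_powsum:
  "(\<Sum>c\<in>UNIV. (c::'a) ^ m) = (if 0 < m \<and> (card (UNIV::'a::{field,finite} set) - 1) dvd m then -1 else 0)"
proof (cases "m = 0")
  case True then show ?thesis using ff_char[where 'a='a] by simp
next
  case m: False
  show ?thesis
  proof (cases "(card (UNIV::'a set) - 1) dvd m")
    case True
    have "(\<Sum>c\<in>UNIV. (c::'a) ^ m) = (\<Sum>c\<in>UNIV - {0}. c ^ m) + 0 ^ m"
      by (subst sum.remove[of _ 0]) auto
    also have "\<dots> = (\<Sum>c\<in>UNIV - {0::'a}. 1)"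
    proof -
      have "0 ^ m = (0::'a)" using m by simp
      moreover have "(\<Sum>c\<in>UNIV - {0}. (c::'a) ^ m) = (\<Sum>c\<in>UNIV - {0::'a}. 1)"
      proof (rule sum.cong)
        fix c :: 'a assume "c \<in> UNIV - {0}"
        then show "c ^ m = 1" using True ff_fermat[of c] by (auto elim!: dvdE simp: power_mult)
      qed simp
      ultimately show ?thesis by simp
    qed
    also have "\<dots> = of_nat (card (UNIV::'a set) - 1)" by (simp add: card_Diff_singleton)
    also have "\<dots> = -1" using ff_char[where 'a='a] ff_card_ge2[where 'a='a] by (simp add: of_nat_diff)
    finally show ?thesis using m True by simp
  next
    case nd: False
    define r where "r = m mod (card (UNIV::'a set) - 1)"
    have r0: "r > 0" using nd unfolding r_def using dvd_eq_mod_eq_0 by auto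
    have rl: "r < card (UNIV::'a set) - 1" unfolding r_def using ff_card_ge2[where 'a='a] by simp
    have "\<exists>g::'a. g \<noteq> 0 \<and> g ^ r \<noteq> 1"
    proof (rule ccontr)
      assume "\<not> ?thesis"
      then have sub: "UNIV - {0::'a} \<subseteq> {x. poly (monom 1 r - 1) x = 0}"
        by (auto simp: poly_monom)
      have ne: "(monom (1::'a) r - 1) \<noteq> 0"
      proof
        assume "monom (1::'a) r - 1 = 0"
        then have "coeff (monom (1::'a) r - 1) r = 0" by simp
        then show False using r0 by simp
      qed
      have deg: "degree (monom (1::'a) r - 1) \<le> r"
        by (metis degree_diff_le degree_monom_le degree_1 le0)
      have "card (UNIV - {0::'a}) \<le> card {x. poly (monom 1 r - 1) x = (0::'a)}"
        by (rule card_mono[OF finite_subset[OF _ finite_UNIV] sub]) simp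
      also have "\<dots> \<le> r" using card_poly_roots_bound[OF ne] deg by linarith
      finally show False using rl by (simp add: card_Diff_singleton)
    qed
    then obtain g :: 'a where g: "g \<noteq> 0" "g ^ r \<noteq> 1" by blast
    have "g ^ m = g ^ ((card (UNIV::'a set) - 1) * (m div (card (UNIV::'a set) - 1)) + r)"
      unfolding r_def by simp
    also have "\<dots> = g ^ r" using ff_fermat[OF g(1)] by (simp only: power_add power_mult) simp
    finally have gm: "g ^ m \<noteq> 1" using g by simp
    have "(\<Sum>c\<in>UNIV. (g * c) ^ m) = (\<Sum>c\<in>UNIV. (c::'a) ^ m)"
      by (rule sum.reindex_bij_witness[of _ "\<lambda>c. c / g" "\<lambda>c. g * c"]) (use g in auto)
    then have "g ^ m * (\<Sum>c\<in>UNIV. (c::'a) ^ m) = 1 * (\<Sum>c\<in>UNIV. (c::'a) ^ m)"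
      by (simp add: power_mult_distrib sum_distrib_left)
    then have "(\<Sum>c\<in>UNIV. (c::'a) ^ m) = 0" using gm
      by (metis mult_cancel_right)
    then show ?thesis using nd by simp
  qed
qed


lemma monics_0: "monics 0 = {1::'a::{field,finite} poly}"
proof -
  have "a = 1" if "a \<in> monics 0" for a :: "'a poly"
    using that unfolding monics_def by (auto elim!: degree_eq_zeroE)
  then show ?thesis by (auto simp: monics_def)
qed

lemma monics_Suc:
  "monics (Suc d) = (\<lambda>(b, c). pCons c b) ` (monics d \<times> (UNIV :: 'a::{field,finite} set))"
proof (rule set_eqI, rule iffI)
  fix a :: "'a poly" assume a: "a \<in> monics (Suc d)"
  obtain c b where ab: "a = pCons c b" by (cases a)
  have "b \<noteq> 0" using a ab by (auto simp: monics_def)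
  then have "b \<in> monics d" using a ab by (auto simp: monics_def)
  then show "a \<in> (\<lambda>(b, c). pCons c b) ` (monics d \<times> UNIV)" using ab by auto
next
  fix a :: "'a poly" assume "a \<in> (\<lambda>(b, c). pCons c b) ` (monics d \<times> UNIV)"
  then obtain b c where ab: "a = pCons c b" "b \<in> monics d" by auto
  then have "b \<noteq> 0" by (auto simp: monics_def)
  then show "a \<in> monics (Suc d)" using ab by (auto simp: monics_def)
qed

lemma finite_monics: "finite (monics d :: 'a::{field,finite} poly set)"
  by (induction d) (simp_all add: monics_0 monics_Suc)

lemma inj_pCons: "inj_on (\<lambda>(b, c). pCons c b) A"
  by (auto simp: inj_on_def)

lemma chi_pCons: "chi_t (pCons c b) = [:[:c:]:] + t_At * chi_t (b::'a::{field,finite} poly)"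
  unfolding chi_t_def t_At_def by (simp add: map_poly_pCons)

lemma const_pCons: "[:pCons c b:] = [:[:c:]:] + theta_At * [:b::'a::{field,finite} poly:]"
  unfolding theta_At_def by simp

lemma chi_1: "chi_t (1::'a::{field,finite} poly) = 1"
  unfolding chi_t_def by simp

lemma const_sum: "finite A \<Longrightarrow> (\<Sum>x\<in>A. [:f x:]) = [:sum f A:]"
  by (induction A rule: finite_induct) auto



definition coef :: "nat \<Rightarrow> nat \<Rightarrow> nat \<Rightarrow> nat \<Rightarrow> 'a::{field,finite} poly poly" where
  "coef \<beta> k \<alpha> l = of_nat (\<beta> choose \<alpha>) * of_nat (k choose l) * t_At ^ \<alpha> * theta_At ^ l"

lemma expand:
  fixes b :: "'a::{field,finite} poly"
  shows "chi_t (pCons c b) ^ \<beta> * [:pCons c b ^ k:] =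
    (\<Sum>p\<in>{..\<beta>} \<times> {..k}. coef \<beta> k (fst p) (snd p) * (chi_t b ^ fst p * [:b ^ snd p:])
       * [:[:c:]:] ^ (\<beta> - fst p + (k - snd p)))"
proof -
  have "chi_t (pCons c b) ^ \<beta> * [:pCons c b ^ k:] =
     (t_At * chi_t b + [:[:c:]:]) ^ \<beta> * (theta_At * [:b:] + [:[:c:]:]) ^ k"
  proof -
    have "[:pCons c b ^ k:] = [:pCons c b:] ^ k" by (simp add: poly_const_pow)
    then show ?thesis by (subst chi_pCons, simp only:, subst const_pCons, simp only: add.commute)
  qed
  also have "\<dots> = (\<Sum>\<alpha>\<le>\<beta>. of_nat (\<beta> choose \<alpha>) * (t_At * chi_t b) ^ \<alpha> * [:[:c:]:] ^ (\<beta> - \<alpha>)) *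
      (\<Sum>l\<le>k. of_nat (k choose l) * (theta_At * [:b:]) ^ l * [:[:c:]:] ^ (k - l))"
    by (simp only: binomial_ring)
  also have "\<dots> = (\<Sum>\<alpha>\<le>\<beta>. \<Sum>l\<le>k. (of_nat (\<beta> choose \<alpha>) * (t_At * chi_t b) ^ \<alpha> * [:[:c:]:] ^ (\<beta> - \<alpha>)) *
      (of_nat (k choose l) * (theta_At * [:b:]) ^ l * [:[:c:]:] ^ (k - l)))"
    by (rule sum_product)
  also have "\<dots> = (\<Sum>p\<in>{..\<beta>} \<times> {..k}. (of_nat (\<beta> choose fst p) * (t_At * chi_t b) ^ fst p * [:[:c:]:] ^ (\<beta> - fst p)) *
      (of_nat (k choose snd p) * (theta_At * [:b:]) ^ snd p * [:[:c:]:] ^ (k - snd p)))"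
    by (simp add: sum.cartesian_product case_prod_beta)
  also have "\<dots> = (\<Sum>p\<in>{..\<beta>} \<times> {..k}. coef \<beta> k (fst p) (snd p) * (chi_t b ^ fst p * [:b ^ snd p:])
       * [:[:c:]:] ^ (\<beta> - fst p + (k - snd p)))"
    by (rule sum.cong[OF refl]) (simp only: coef_def power_add power_mult_distrib poly_const_pow mult_ac)
  finally show ?thesis .
qed


lemma S_rec:
  "(S_d \<beta> k (Suc d) :: 'a::{field,finite} poly poly) =
   (\<Sum>p\<in>{..\<beta>} \<times> {..k}. coef \<beta> k (fst p) (snd p) * S_d (fst p) (snd p) d *
      [:[:\<Sum>c\<in>UNIV. (c::'a) ^ (\<beta> - fst p + (k - snd p)):]:])"
proof -
  have "(S_d \<beta> k (Suc d) :: 'a poly poly) =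
     (\<Sum>(b,c)\<in>monics d \<times> (UNIV::'a set). chi_t (pCons c b) ^ \<beta> * [:pCons c b ^ k:])"
    unfolding S_d_def monics_Suc by (subst sum.reindex[OF inj_pCons]) (simp add: comp_def split_beta)
  also have "\<dots> = (\<Sum>b\<in>monics d. \<Sum>c\<in>(UNIV::'a set). chi_t (pCons c b) ^ \<beta> * [:pCons c b ^ k:])"
    by (rule sum.cartesian_product[symmetric])
  also have "\<dots> = (\<Sum>b\<in>monics d. \<Sum>c\<in>(UNIV::'a set). \<Sum>p\<in>{..\<beta>} \<times> {..k}.
       coef \<beta> k (fst p) (snd p) * (chi_t b ^ fst p * [:b ^ snd p:]) * [:[:c:]:] ^ (\<beta> - fst p + (k - snd p)))"
    by (simp only: expand)
  also have "\<dots> = (\<Sum>p\<in>{..\<beta>} \<times> {..k}. \<Sum>b\<in>monics d. \<Sum>c\<in>(UNIV::'a set).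
       coef \<beta> k (fst p) (snd p) * (chi_t b ^ fst p * [:b ^ snd p:]) * [:[:c:]:] ^ (\<beta> - fst p + (k - snd p)))"
    by (simp only: sum.swap[of _ "UNIV::'a set" "{..\<beta>} \<times> {..k}"] sum.swap[of _ "monics d" "{..\<beta>} \<times> {..k}"])
  also have "\<dots> = (\<Sum>p\<in>{..\<beta>} \<times> {..k}. coef \<beta> k (fst p) (snd p) * S_d (fst p) (snd p) d *
      [:[:\<Sum>c\<in>UNIV. (c::'a) ^ (\<beta> - fst p + (k - snd p)):]:])"
  proof (rule sum.cong[OF refl])
    fix p assume "p \<in> {..\<beta>} \<times> {..k}"
    let ?m = "\<beta> - fst p + (k - snd p)"
    have C: "(\<Sum>c\<in>(UNIV::'a set). [:[:c:]:] ^ ?m) = [:[:\<Sum>c\<in>UNIV. (c::'a) ^ ?m:]:]"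
      by (simp add: poly_const_pow const_sum)
    show "(\<Sum>b\<in>monics d. \<Sum>c\<in>(UNIV::'a set).
       coef \<beta> k (fst p) (snd p) * (chi_t b ^ fst p * [:b ^ snd p:]) * [:[:c:]:] ^ ?m) =
       coef \<beta> k (fst p) (snd p) * S_d (fst p) (snd p) d * [:[:\<Sum>c\<in>UNIV. (c::'a) ^ ?m:]:]"
    proof -
      have "coef \<beta> k (fst p) (snd p) * S_d (fst p) (snd p) d * [:[:\<Sum>c\<in>UNIV. (c::'a) ^ ?m:]:] =
         (\<Sum>b\<in>monics d. coef \<beta> k (fst p) (snd p) * (chi_t b ^ fst p * [:b ^ snd p:])) *
         (\<Sum>c\<in>(UNIV::'a set). [:[:c:]:] ^ ?m)"
        unfolding S_d_def C sum_distrib_left ..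
      also have "\<dots> = (\<Sum>b\<in>monics d. \<Sum>c\<in>(UNIV::'a set).
         coef \<beta> k (fst p) (snd p) * (chi_t b ^ fst p * [:b ^ snd p:]) * [:[:c:]:] ^ ?m)"
        by (rule sum_product)
      finally show ?thesis by simp
    qed
  qed
  finally show ?thesis .
qed



definition Yset :: "'a::{field,finite} itself \<Rightarrow> nat \<Rightarrow> nat \<Rightarrow> (nat \<times> nat) set" where
  "Yset _ \<beta> k = {p \<in> {..\<beta>} \<times> {..k}. 0 < \<beta> - fst p + (k - snd p) \<and>
      (card (UNIV::'a set) - 1) dvd (\<beta> - fst p + (k - snd p))}"

lemma S_rec2:
  "(S_d \<beta> k (Suc d) :: 'a::{field,finite} poly poly) =
   - (\<Sum>p\<in>Yset TYPE('a) \<beta> k. coef \<beta> k (fst p) (snd p) * S_d (fst p) (snd p) d)"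
proof -
  have "(S_d \<beta> k (Suc d) :: 'a poly poly) = (\<Sum>p\<in>{..\<beta>} \<times> {..k}.
     if 0 < \<beta> - fst p + (k - snd p) \<and> (card (UNIV::'a set) - 1) dvd (\<beta> - fst p + (k - snd p))
     then - (coef \<beta> k (fst p) (snd p) * S_d (fst p) (snd p) d) else 0)"
  proof -
    have m1: "[:- 1 :: 'a:] = - 1" by (simp only: one_pCons minus_pCons minus_zero)
    show ?thesis unfolding S_rec ff_powsum by (rule sum.cong) (auto simp: m1)
  qed
  also have "\<dots> = (\<Sum>p\<in>Yset TYPE('a) \<beta> k. - (coef \<beta> k (fst p) (snd p) * S_d (fst p) (snd p) d))"
    unfolding Yset_def by (rule sum.inter_filter[symmetric]) simp
  finally show ?thesis by (simp add: sum_negf)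
qed

lemma Yset_lt: "p \<in> Yset TYPE('a::{field,finite}) \<beta> k \<Longrightarrow> fst p + snd p < \<beta> + k"
  unfolding Yset_def by auto

lemma finite_Yset: "finite (Yset TYPE('a::{field,finite}) \<beta> k)"
  unfolding Yset_def by auto

lemma S_0: "(S_d \<beta> k 0 :: 'a::{field,finite} poly poly) = 1"
  unfolding S_d_def monics_0 by (simp add: chi_1)

lemma S_zero: "\<beta> + k < d \<Longrightarrow> (S_d \<beta> k d :: 'a::{field,finite} poly poly) = 0"
proof (induction d arbitrary: \<beta> k)
  case 0 then show ?case by simp
next
  case (Suc d)
  have "(S_d (fst p) (snd p) d :: 'a poly poly) = 0" if "p \<in> Yset TYPE('a) \<beta> k" for p
    using Suc.IH Yset_lt[OF that] Suc.prems by auto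
  then show ?case by (simp add: S_rec2)
qed

lemma L_sum: "\<beta> + k < N \<Longrightarrow> (L_val \<beta> k :: 'a::{field,finite} poly poly) = (\<Sum>d<N. S_d \<beta> k d)"
  unfolding L_val_def
proof (rule sum.mono_neutral_left)
  assume N: "\<beta> + k < N"
  show "{d. (S_d \<beta> k d :: 'a poly poly) \<noteq> 0} \<subseteq> {..<N}"
  proof
    fix x assume "x \<in> {d. (S_d \<beta> k d :: 'a poly poly) \<noteq> 0}"
    then have "\<not> \<beta> + k < x" using S_zero[of \<beta> k x] by auto
    then show "x \<in> {..<N}" using N by simp
  qed
qed auto



theorem corollary2p0p2:
  fixes \<beta> k :: nat
  defines "q \<equiv> card (UNIV :: 'a::{field,finite} set)"
  defines "X \<equiv> {(\<alpha>, l). \<alpha> \<le> \<beta> \<and> l \<le> k \<and> (\<alpha>, l) \<noteq> (\<beta>, k)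
                 \<and> (int q - 1) dvd (int (\<beta> + k) - int (\<alpha> + l))}"
  shows "(L_val 0 0 :: 'a poly poly) = 1 \<and>
         (L_val \<beta> k :: 'a poly poly) = 1 - (\<Sum>(\<alpha>, l)\<in>X.
            of_nat (\<beta> choose \<alpha>) * of_nat (k choose l) * t_At ^ \<alpha> * theta_At ^ l * L_val \<alpha> l)"
proof
  show "(L_val 0 0 :: 'a poly poly) = 1"
    using L_sum[of 0 0 1] by (simp add: S_0)
next
  have q2: "q \<ge> 2" unfolding q_def by (rule ff_card_ge2)
  have XY: "X = Yset TYPE('a) \<beta> k"
  proof (rule set_eqI)
    fix p :: "nat \<times> nat"
    obtain a l where p: "p = (a, l)" by (cases p)
    show "p \<in> X \<longleftrightarrow> p \<in> Yset TYPE('a) \<beta> k"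
    proof (cases "a \<le> \<beta> \<and> l \<le> k")
      case True
      have e1: "int q - 1 = int (q - 1)" using q2 by simp
      have e2: "int (\<beta> + k) - int (a + l) = int (\<beta> - a + (k - l))" using True by simp
      have e3: "(a, l) \<noteq> (\<beta>, k) \<longleftrightarrow> 0 < \<beta> - a + (k - l)" using True by auto
      show ?thesis unfolding X_def Yset_def p q_def[symmetric]
        using True e1 e2 e3 by (simp only: mem_Collect_eq case_prod_conv fst_conv snd_conv
            mem_Sigma_iff atMost_iff int_dvd_int_iff) simp
    next
      case False
      then show ?thesis unfolding X_def Yset_def p by auto
    qed
  qed
  define n where "n = \<beta> + k"
  have "(L_val \<beta> k :: 'a poly poly) = (\<Sum>d<Suc n. S_d \<beta> k d)"
    by (rule L_sum) (simp add: n_def)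
  also have "\<dots> = 1 + (\<Sum>d<n. S_d \<beta> k (Suc d))"
    by (subst sum.lessThan_Suc_shift) (simp add: S_0)
  also have "\<dots> = 1 + (\<Sum>d<n. - (\<Sum>p\<in>Yset TYPE('a) \<beta> k. coef \<beta> k (fst p) (snd p) * S_d (fst p) (snd p) d))"
    by (simp only: S_rec2)
  also have "\<dots> = 1 - (\<Sum>p\<in>Yset TYPE('a) \<beta> k. coef \<beta> k (fst p) (snd p) * (\<Sum>d<n. S_d (fst p) (snd p) d))"
    by (simp add: sum_negf sum_distrib_left sum.swap[of _ "{..<n}"])
  also have "\<dots> = 1 - (\<Sum>p\<in>Yset TYPE('a) \<beta> k. coef \<beta> k (fst p) (snd p) * L_val (fst p) (snd p))"
    using L_sum Yset_lt n_def by (metis (no_types, lifting) sum.cong)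
  also have "\<dots> = 1 - (\<Sum>(\<alpha>, l)\<in>X.
            of_nat (\<beta> choose \<alpha>) * of_nat (k choose l) * t_At ^ \<alpha> * theta_At ^ l * L_val \<alpha> l)"
    unfolding XY by (simp add: coef_def split_def)
  finally show "(L_val \<beta> k :: 'a poly poly) = 1 - (\<Sum>(\<alpha>, l)\<in>X.
            of_nat (\<beta> choose \<alpha>) * of_nat (k choose l) * t_At ^ \<alpha> * theta_At ^ l * L_val \<alpha> l)" .
qed


end
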